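(* Let $Q$ be a non-degenerate non-definite hermitian form on $\mathbb{C}^N$, and let $(w_1,\dots,w_N)$ be a basis of $\mathbb{C}^N$ with $Q(w_i)=0$ for $1\le i\le N$ and $Q(w_i,w_j)\ne0$ for $1\le i\ne j\le N$. Let $G_i$ be the stabilizer of $w_i$ in $SU(Q)$. Then the smallest closed subgroup of $SU(Q)$ containing $G_1,\dots,G_N$ is $SU(Q)$.
   Context: $Q(u)$ denotes $Q(u,u)$; $SU(Q)$ is the group of determinant-one linear automorphisms of $\mathbb{C}^N$ preserving $Q$; "closed" refers to the usual topology. *)

theory Defs
  imports "HOL-Analysis.Analysis"
begin

text \<open>Hermitian forms on C^N, with N given by a finite index type 'n.
  Convention: linear in the first argument, conjugate-linear in the second.\<close>

definition hermitian_form :: "(complex^'n \<Rightarrow> complex^'n \<Rightarrow> complex) \<Rightarrow> bool" where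
  "hermitian_form Q \<longleftrightarrow>
     (\<forall>u u' v. Q (u + u') v = Q u v + Q u' v) \<and>
     (\<forall>c u v. Q (c *s u) v = c * Q u v) \<and>
     (\<forall>u v. Q v u = cnj (Q u v))"

definition nondegenerate_form :: "(complex^'n \<Rightarrow> complex^'n \<Rightarrow> complex) \<Rightarrow> bool" where
  "nondegenerate_form Q \<longleftrightarrow> (\<forall>u. (\<forall>v. Q u v = 0) \<longrightarrow> u = 0)"

text \<open>Non-definite: Q(u)=Q(u,u) (real for a hermitian form) takes both signs.\<close>
definition nondefinite_form :: "(complex^'n \<Rightarrow> complex^'n \<Rightarrow> complex) \<Rightarrow> bool" where
  "nondefinite_form Q \<longleftrightarrow> (\<exists>u v. Re (Q u u) > 0 \<and> Re (Q v v) < 0)"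

definition SU_form :: "(complex^'n \<Rightarrow> complex^'n \<Rightarrow> complex) \<Rightarrow> (complex^'n^'n) set" where
  "SU_form Q = {A. det A = 1 \<and> (\<forall>u v. Q (A *v u) (A *v v) = Q u v)}"

definition stabilizer_SU ::
  "(complex^'n \<Rightarrow> complex^'n \<Rightarrow> complex) \<Rightarrow> complex^'n \<Rightarrow> (complex^'n^'n) set" where
  "stabilizer_SU Q w = {A \<in> SU_form Q. A *v w = w}"

definition matrix_subgroup :: "(complex^'n^'n) set \<Rightarrow> bool" where
  "matrix_subgroup H \<longleftrightarrow> mat 1 \<in> H \<and> (\<forall>A\<in>H. \<forall>B\<in>H. A ** B \<in> H)
      \<and> (\<forall>A\<in>H. invertible A \<and> matrix_inv A \<in> H)"

definition closed_subgroup_generated ::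
  "(complex^'n \<Rightarrow> complex^'n \<Rightarrow> complex) \<Rightarrow> (complex^'n^'n) set \<Rightarrow> (complex^'n^'n) set" where
  "closed_subgroup_generated Q S =
     \<Inter>{H. H \<subseteq> SU_form Q \<and> matrix_subgroup H \<and> closed H \<and> S \<subseteq> H}"

end

theory Submission
  imports Defs "HOL-Computational_Algebra.Fundamental_Theorem_Algebra"
begin


lemma smat_mult_left: "(\<chi> i j. c * A$i$j) ** (B::'a::comm_ring_1^'n^'n) = (\<chi> i j. c * (A**B)$i$j)"
  by (simp add: matrix_matrix_mult_def vec_eq_iff sum_distrib_left mult.assoc)

lemma det_poly:
  fixes A B :: "complex^'n^'n"
  shows "\<exists>P. \<forall>t. det (\<chi> i j. A$i$j + t * B$i$j) = poly P t"
proof -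
  define P where "P = (\<Sum>p\<in>{p. p permutes (UNIV::'n set)}.
      smult (of_int (sign p)) (\<Prod>i\<in>UNIV. [:A$i$p i, B$i$p i:]))"
  have "\<forall>t. det (\<chi> i j. A$i$j + t * B$i$j) = poly P t"
    by (simp add: P_def det_def poly_sum poly_prod)
  then show ?thesis by blast
qed

lemma det_unipotent:
  fixes N :: "complex^'n^'n"
  assumes "N ** N ** N = 0"
  shows "det (mat 1 + N) = 1"
proof -
  define M where "M t = (\<chi> i j. (mat 1 :: complex^'n^'n)$i$j + t * N$i$j)" for t
  obtain P where P: "\<And>t. det (M t) = poly P t" using det_poly[of "mat 1" N] unfolding M_def by blast
  have nz: "poly P t \<noteq> 0" for t
  proof -
    define Nt where "Nt = (\<chi> i j. t * N$i$j)"
    have Mt: "M t = mat 1 + Nt" by (simp add: M_def Nt_def vec_eq_iff)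
    have "Nt ** Nt ** Nt = (\<chi> i j. t * (t * (t * (N ** N ** N)$i$j)))"
      unfolding Nt_def by (simp add: matrix_matrix_mult_def vec_eq_iff sum_distrib_left sum_distrib_right mult_ac)
    also have "\<dots> = 0" using assms by (simp add: vec_eq_iff)
    finally have N3: "Nt ** Nt ** Nt = 0" .
    have "M t ** (mat 1 - Nt + Nt ** Nt) = mat 1"
    proof -
      have n3: "Nt *v (Nt *v (Nt *v x)) = 0" for x
        using N3 by (metis matrix_vector_mul_assoc matrix_vector_mult_0)
      show ?thesis unfolding Mt matrix_eq
        by (simp add: matrix_vector_mul_assoc[symmetric] algebra_simps n3)
    qed
    then have "det (M t) * det (mat 1 - Nt + Nt ** Nt) = 1"
      by (metis det_I det_mul)
    then show ?thesis using P by (metis mult_zero_left zero_neq_one)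
  qed
  have "constant (poly P)"
    using fundamental_theorem_of_algebra nz by blast
  then have "poly P 1 = poly P 0" unfolding constant_def by blast
  moreover have "M 1 = mat 1 + N" "M 0 = mat 1" by (simp_all add: M_def vec_eq_iff)
  ultimately show ?thesis using P by (metis det_I)
qed



lemma det_eigen:
  fixes M B :: "complex^'n^'n"
  assumes B: "invertible B" and ev: "\<And>j. M *v column j B = l j *s column j B"
  shows "det M = prod l UNIV"
proof -
  have "M ** B = B ** (\<chi> i j. if i = j then l j else 0)"
  proof -
    have "(M ** B) $ i $ j = (B ** (\<chi> i j. if i = j then l j else 0)) $ i $ j" for i j
    proof -
      have "(M ** B) $ i $ j = (M *v column j B) $ i"
        by (simp add: matrix_matrix_mult_def matrix_vector_mult_def column_def)
      also have "\<dots> = l j * B $ i $ j" using ev[of j] by (simp add: column_def)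
      also have "\<dots> = (\<Sum>k\<in>UNIV. B$i$k * (if k = j then l j else 0))"
        by (simp add: if_distrib[of "(*) _"] mult.commute cong: if_cong)
      also have "\<dots> = (B ** (\<chi> i j. if i = j then l j else 0)) $ i $ j"
        by (simp add: matrix_matrix_mult_def)
      finally show ?thesis .
    qed
    then show ?thesis by (simp add: vec_eq_iff)
  qed
  note MB = this
  have dD: "det (\<chi> i j. if i = j then l j else 0) = prod l UNIV"
    by (subst det_diagonal) auto
  have "det M * det B = det B * prod l UNIV"
    unfolding det_mul[symmetric] MB det_mul dD ..
  moreover have "det B \<noteq> 0" using B invertible_det_nz by blast
  ultimately show ?thesis by (simp add: mult.commute)
qed

locale hf =
  fixes Q :: "complex^'n \<Rightarrow> complex^'n \<Rightarrow> complex"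
  assumes herm: "hermitian_form Q"
begin

lemma Qadd1[simp]: "Q (x + y) z = Q x z + Q y z"
  using herm unfolding hermitian_form_def by blast
lemma Qsm1[simp]: "Q (c *s x) z = c * Q x z"
  using herm unfolding hermitian_form_def by blast
lemma Qsym: "Q y x = cnj (Q x y)"
  using herm unfolding hermitian_form_def by blast
lemma Qadd2[simp]: "Q x (y + z) = Q x y + Q x z"
  by (metis Qadd1 Qsym complex_cnj_add)
lemma Qsm2[simp]: "Q x (c *s y) = cnj c * Q x y"
  by (metis Qsm1 Qsym complex_cnj_mult)
lemma Qzero1[simp]: "Q 0 x = 0"
  using Qsm1[of 0 0 x] by simp
lemma Qzero2[simp]: "Q x 0 = 0"
  using Qsm2[of x 0 0] by simp
lemma Qneg1[simp]: "Q (- x) y = - Q x y"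
  using Qsm1[of "-1" x y] by (simp add: vector_sneg_minus1[symmetric])
lemma Qneg2[simp]: "Q x (- y) = - Q x y"
  using Qsm2[of x "-1" y] by (simp add: vector_sneg_minus1[symmetric])
lemma Qdiff1[simp]: "Q (x - y) z = Q x z - Q y z"
  by (metis Qadd1 Qneg1 diff_conv_add_uminus)
lemma Qdiff2[simp]: "Q x (y - z) = Q x y - Q x z"
  by (metis Qadd2 Qneg2 diff_conv_add_uminus)
lemma Qsum1: "Q (\<Sum>i\<in>S. f i) z = (\<Sum>i\<in>S. Q (f i) z)"
  by (induct S rule: infinite_finite_induct) auto
lemma Qreal: "cnj (Q x x) = Q x x"
  by (metis Qsym)

definition X :: "complex^'n \<Rightarrow> complex^'n \<Rightarrow> complex \<Rightarrow> complex^'n \<Rightarrow> complex^'n" where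
  "X p u z x = x + Q x p *s u - Q x u *s p + (z * Q x p) *s p"

lemma X_linear: "Vector_Spaces.linear (*s) (*s) (X p u z)"
  by unfold_locales (simp_all add: X_def algebra_simps vector_add_ldistrib vector_sadd_rdistrib
      vector_smult_assoc vector_ssub_ldistrib vector_sub_rdistrib)

lemma X_fix: "Q p p = 0 \<Longrightarrow> Q u p = 0 \<Longrightarrow> X p u z p = p"
  by (simp add: X_def) (metis Qsym complex_cnj_zero)

lemma X_iso:
  assumes "Q p p = 0" "Q u p = 0" "z + cnj z + Q u u = 0"
  shows "Q (X p u z x) (X p u z y) = Q x y"
proof -
  have pu: "Q p u = 0" using assms(2) by (metis Qsym complex_cnj_zero)
  have a: "Q u y = cnj (Q y u)" "Q p y = cnj (Q y p)" by (simp_all add: Qsym[of y])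
  have "Q (X p u z x) (X p u z y) = Q x y + Q x p * cnj (Q y p) * (z + cnj z + Q u u)"
    unfolding X_def using assms(1,2) pu by (simp add: a algebra_simps)
  then show ?thesis using assms by simp
qed


definition XM where "XM p u z = matrix (X p u z)"

lemma XM_apply[simp]: "XM p u z *v x = X p u z x"
  unfolding XM_def by (rule matrix_works[OF X_linear])

definition N0 :: "complex^'n \<Rightarrow> complex^'n \<Rightarrow> complex \<Rightarrow> complex^'n \<Rightarrow> complex^'n" where
  "N0 p u z x = Q x p *s u - Q x u *s p + (z * Q x p) *s p"

lemma N0_linear: "Vector_Spaces.linear (*s) (*s) (N0 p u z)"
  by unfold_locales (simp_all add: N0_def algebra_simps vector_add_ldistrib vector_sadd_rdistrib
      vector_smult_assoc vector_ssub_ldistrib vector_sub_rdistrib)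

lemma XM_det:
  assumes "Q p p = 0" "Q u p = 0"
  shows "det (XM p u z) = 1"
proof -
  have pu: "Q p u = 0" using assms(2) by (metis Qsym complex_cnj_zero)
  let ?N = "matrix (N0 p u z)"
  have Nv: "?N *v x = N0 p u z x" for x by (rule matrix_works[OF N0_linear])
  have "XM p u z = mat 1 + ?N"
    unfolding matrix_eq by (simp add: Nv matrix_vector_mult_add_rdistrib X_def N0_def algebra_simps)
  moreover have "?N ** ?N ** ?N = 0"
  proof -
    have np: "N0 p u z p = 0" using assms pu by (simp add: N0_def)
    have nu: "N0 p u z u = - Q u u *s p" using assms pu by (simp add: N0_def)
    have "N0 p u z (N0 p u z (N0 p u z x)) = 0" for x
      using assms pu np nu by (simp add: N0_def vector_smult_assoc)
    then show ?thesis unfolding matrix_eq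
      by (simp add: Nv matrix_vector_mul_assoc[symmetric])
  qed
  ultimately show ?thesis by (simp add: det_unipotent)
qed

lemma XM_stab:
  assumes "Q p p = 0" "Q u p = 0" "z + cnj z + Q u u = 0"
  shows "XM p u z \<in> stabilizer_SU Q p"
  unfolding stabilizer_SU_def SU_form_def
  using XM_det[OF assms(1,2)] X_iso[OF assms] X_fix[OF assms(1,2)] by simp


lemma Qsum2: "Q z (\<Sum>i\<in>S. f i) = (\<Sum>i\<in>S. Q z (f i))"
  by (induct S rule: infinite_finite_induct) auto

lemma Q_expand: "Q x y = (\<Sum>i\<in>UNIV. \<Sum>j\<in>UNIV. x$i * cnj (y$j) * Q (axis i 1) (axis j 1))"
proof -
  have "Q x y = Q (\<Sum>i\<in>UNIV. x$i *s axis i 1) (\<Sum>j\<in>UNIV. y$j *s axis j 1)"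
    by (simp add: basis_expansion)
  also have "\<dots> = (\<Sum>i\<in>UNIV. \<Sum>j\<in>UNIV. x$i * cnj (y$j) * Q (axis i 1) (axis j 1))"
    apply (simp add: Qsum1 Qsum2 sum_distrib_left)
    apply (subst sum.swap)
    apply (simp add: mult_ac)
    done
  finally show ?thesis .
qed

lemma cont_QA: "continuous_on UNIV (\<lambda>A::complex^'n^'n. Q (A *v u) (A *v v))"
  apply (subst Q_expand)
  unfolding matrix_vector_mult_def vec_lambda_beta
  by (intro continuous_intros)

lemma cont_det: "continuous_on UNIV (\<lambda>A::complex^'n^'n. det A)"
  unfolding det_def
  by (intro continuous_intros)

lemma SU_closed: "closed (SU_form Q)"
proof -
  have "SU_form Q = {A. det A = 1} \<inter> (\<Inter>u. \<Inter>v. {A. Q (A *v u) (A *v v) = Q u v})"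
    unfolding SU_form_def by auto
  moreover have "closed {A::complex^'n^'n. det A = 1}"
    by (rule closed_Collect_eq[OF cont_det continuous_on_const])
  moreover have "closed {A::complex^'n^'n. Q (A *v u) (A *v v) = Q u v}" for u v
    by (rule closed_Collect_eq[OF cont_QA continuous_on_const])
  ultimately show ?thesis by (simp add: closed_Int closed_INT)
qed

lemma inv_props:
  assumes "invertible (A::complex^'n^'n)"
  shows "A ** matrix_inv A = mat 1" "matrix_inv A ** A = mat 1"
  using someI_ex[OF assms[unfolded invertible_def]] unfolding matrix_inv_def by auto

lemma SU_mult: "A \<in> SU_form Q \<Longrightarrow> B \<in> SU_form Q \<Longrightarrow> A ** B \<in> SU_form Q"
  unfolding SU_form_def by (simp add: det_mul matrix_vector_mul_assoc[symmetric])

lemma SU_one: "mat 1 \<in> SU_form Q"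
  unfolding SU_form_def by simp

lemma SU_invertible: "A \<in> SU_form Q \<Longrightarrow> invertible A"
  unfolding SU_form_def by (simp add: invertible_det_nz)

lemma SU_inv:
  assumes "A \<in> SU_form Q"
  shows "matrix_inv A \<in> SU_form Q"
proof -
  have inv: "invertible A" using SU_invertible[OF assms] .
  have "det A * det (matrix_inv A) = 1"
    using inv_props(1)[OF inv] by (metis det_I det_mul)
  then have d: "det (matrix_inv A) = 1" using assms by (simp add: SU_form_def)
  have "Q (matrix_inv A *v u) (matrix_inv A *v v) = Q u v" for u v
  proof -
    have "Q (matrix_inv A *v u) (matrix_inv A *v v) = Q (A *v (matrix_inv A *v u)) (A *v (matrix_inv A *v v))"
      using assms by (simp add: SU_form_def)
    also have "\<dots> = Q u v" by (simp add: matrix_vector_mul_assoc inv_props(1)[OF inv])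
    finally show ?thesis .
  qed
  then show ?thesis using d by (simp add: SU_form_def)
qed

lemma SU_subgroup: "matrix_subgroup (SU_form Q)"
  unfolding matrix_subgroup_def using SU_one SU_mult SU_inv SU_invertible by blast

end

locale pair = hf Q for Q :: "complex^'n \<Rightarrow> complex^'n \<Rightarrow> complex" +
  fixes e f :: "complex^'n"
  assumes nd: "nondegenerate_form Q"
    and ee: "Q e e = 0" and ff: "Q f f = 0" and ef: "Q e f = 1"
begin

lemma fe: "Q f e = 1" using ef Qsym[of f e] by simp

definition wp where "wp x = x - Q x f *s e - Q x e *s f"

lemma wp_e: "Q (wp x) e = 0" and wp_f: "Q (wp x) f = 0"
  by (simp_all add: wp_def ee ff ef fe)

lemma e_wp: "Q e (wp x) = 0" and f_wp: "Q f (wp x) = 0"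
  using wp_e[of x] wp_f[of x] Qsym[of e "wp x"] Qsym[of f "wp x"] by simp_all

lemma S1:
  assumes "v \<noteq> 0"
  shows "\<exists>h\<in>stabilizer_SU Q e. Q (h *v v) f \<noteq> 0"
proof (cases "Q v f = 0")
  case False
  have "mat 1 \<in> stabilizer_SU Q e" by (simp add: stabilizer_SU_def SU_one)
  then show ?thesis using False by force
next
  case vf: True
  show ?thesis
  proof (cases "Q v e = 0")
    case False
    have "XM e 0 \<i> \<in> stabilizer_SU Q e"
      by (rule XM_stab) (simp_all add: ee)
    moreover have "Q (XM e 0 \<i> *v v) f \<noteq> 0"
      using False vf by (simp add: X_def ef)
    ultimately show ?thesis by blast
  next
    case ve: True
    obtain y where y: "Q v y \<noteq> 0" using nd assms unfolding nondegenerate_form_def by blast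
    define u where "u = wp y"
    have vu: "Q v u = Q v y" using ve vf by (simp add: u_def wp_def)
    define z where "z = - Q u u / 2"
    have zc: "z + cnj z + Q u u = 0"
      unfolding z_def using Qreal[of u] by (simp add: complex_eq_iff)
    have "XM e u z \<in> stabilizer_SU Q e"
      by (rule XM_stab[OF ee _ zc]) (simp add: u_def wp_e)
    moreover have "Q (XM e u z *v v) f \<noteq> 0"
      using ve vf y vu by (simp add: X_def ef u_def wp_f)
    ultimately show ?thesis by blast
  qed
qed

lemma S2:
  assumes iso: "Q v v = 0" and a: "Q v f \<noteq> 0"
  shows "\<exists>h\<in>stabilizer_SU Q f. h *v v = Q v f *s e"
proof -
  define \<alpha> where "\<alpha> = Q v f"
  define y where "y = Q v e"
  define w where "w = wp v"
  have vdec: "v = \<alpha> *s e + y *s f + w" unfolding w_def wp_def \<alpha>_def y_def by simp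
  have we: "Q w e = 0" "Q e w = 0" "Q w f = 0" "Q f w = 0"
    unfolding w_def by (simp_all add: wp_e wp_f e_wp f_wp)
  have ww: "cnj (Q w w) = Q w w" by (rule Qreal)
  have isoe: "\<alpha> * cnj y + y * cnj \<alpha> + Q w w = 0"
    using iso unfolding vdec by (simp add: ee ff ef fe we algebra_simps)
  define u where "u = (- 1 / \<alpha>) *s w"
  define z where "z = - (y + Q w w / cnj \<alpha>) / \<alpha>"
  have an: "\<alpha> \<noteq> 0" using a \<alpha>_def by simp
  have uu: "Q u u = Q w w / (\<alpha> * cnj \<alpha>)" unfolding u_def by simp
  have zc: "z + cnj z + Q u u = 0"
  proof -
    have "z + cnj z + Q u u = - (\<alpha> * cnj y + y * cnj \<alpha> + Q w w) / (\<alpha> * cnj \<alpha>)"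
      unfolding uu z_def using an ww by (simp add: field_simps)
    then show ?thesis using isoe by simp
  qed
  have "XM f u z \<in> stabilizer_SU Q f"
    by (rule XM_stab[OF ff _ zc]) (simp add: u_def we)
  moreover have "XM f u z *v v = \<alpha> *s e"
  proof -
    have vw: "Q v w = Q w w" by (subst vdec) (simp add: we)
    then have qvu: "Q v u = - Q w w / cnj \<alpha>"
      unfolding u_def by simp
    have "XM f u z *v v = v + \<alpha> *s u - Q v u *s f + (z * \<alpha>) *s f"
      by (simp add: X_def \<alpha>_def)
    also have "\<dots> = \<alpha> *s e + (y + Q w w / cnj \<alpha> + z * \<alpha>) *s f"
      unfolding qvu u_def using an vw by (subst vdec) (simp add: algebra_simps vector_sadd_rdistrib)
    also have "y + Q w w / cnj \<alpha> + z * \<alpha> = 0" unfolding z_def using an by (simp add: field_simps)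
    finally show ?thesis by simp
  qed
  ultimately show ?thesis unfolding \<alpha>_def by blast
qed


lemma torus_real:
  assumes r: "cnj \<alpha> = \<alpha>" and an: "\<alpha> \<noteq> 0"
  shows "\<exists>t1\<in>stabilizer_SU Q f. \<exists>t2\<in>stabilizer_SU Q e. \<exists>t3\<in>stabilizer_SU Q f.
           (t3 ** t2 ** t1) *v e = \<alpha> *s e"
proof -
  define z2 where "z2 = \<i> * (1 - \<alpha>)"
  define z3 where "z3 = - \<i> / \<alpha>"
  have s1: "XM f 0 \<i> \<in> stabilizer_SU Q f" by (rule XM_stab) (simp_all add: ff)
  have c2: "z2 + cnj z2 + Q 0 0 = 0" unfolding z2_def using r by (simp add: algebra_simps)
  have s2: "XM e 0 z2 \<in> stabilizer_SU Q e" by (rule XM_stab[OF ee _ c2]) simp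
  have c3: "z3 + cnj z3 + Q 0 0 = 0" unfolding z3_def using r by simp
  have s3: "XM f 0 z3 \<in> stabilizer_SU Q f" by (rule XM_stab[OF ff _ c3]) simp
  have a1: "XM f 0 \<i> *v e = e + \<i> *s f" by (simp add: X_def ef)
  have a2: "XM e 0 z2 *v (e + \<i> *s f) = \<alpha> *s e + \<i> *s f"
    by (simp add: X_def ee fe z2_def algebra_simps vector_sadd_rdistrib[symmetric])
  have a3: "XM f 0 z3 *v (\<alpha> *s e + \<i> *s f) = \<alpha> *s e"
    using an by (simp add: X_def ff ef z3_def algebra_simps vector_sadd_rdistrib[symmetric])
  have "(XM f 0 z3 ** XM e 0 z2 ** XM f 0 \<i>) *v e = \<alpha> *s e"
    by (simp only: matrix_vector_mul_assoc[symmetric] a1 a2 a3)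
  then show ?thesis using s1 s2 s3 by blast
qed


lemma torus_complex:
  assumes u1e: "Q u1 e = 0" and u1f: "Q u1 f = 0" and su: "Q u1 u1 \<noteq> 0"
    and im: "Im \<alpha> \<noteq> 0"
  shows "\<exists>t1\<in>stabilizer_SU Q f. \<exists>t2\<in>stabilizer_SU Q e. \<exists>t3\<in>stabilizer_SU Q f.
           (t3 ** t2 ** t1) *v e = \<alpha> *s e"
proof -
  have eu1: "Q e u1 = 0" and fu1: "Q f u1 = 0" using u1e u1f Qsym[of e u1] Qsym[of f u1] by simp_all
  define s where "s = Re (Q u1 u1)"
  have sdef: "Q u1 u1 = of_real s" unfolding s_def using Qreal[of u1] by (simp add: complex_eq_iff)
  have sn: "s \<noteq> 0" using su sdef by auto
  define \<tau> where "\<tau> = Re \<alpha> / Im \<alpha>"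
  define \<beta> where "\<beta> = Im \<alpha>"
  define c where "c = of_real \<tau> + \<i>"
  have ac: "\<alpha> = of_real \<beta> * c" unfolding c_def \<tau>_def \<beta>_def using im by (simp add: complex_eq_iff)
  have ccn: "c * cnj c = of_real (1 + \<tau>^2)" unfolding c_def by (simp add: complex_eq_iff power2_eq_square)
  have cn: "c \<noteq> 0" unfolding c_def by (simp add: complex_eq_iff)
  have cnn: "cnj c = of_real \<tau> - \<i>" unfolding c_def by simp
  define z1 where "z1 = of_real (s/2) * \<i> * c"
  have z1n: "z1 \<noteq> 0" unfolding z1_def using sn cn by simp
  have c1: "z1 + cnj z1 + Q u1 u1 = 0" unfolding z1_def sdef c_def by (simp add: complex_eq_iff)
  have s1: "XM f u1 z1 \<in> stabilizer_SU Q f" by (rule XM_stab[OF ff u1f c1])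
  define u2 where "u2 = (- 1 / z1) *s u1"
  define b where "b = (2/s) * (\<tau> / (1 + \<tau>^2) - \<beta>)"
  define z2 where "z2 = - 2 / (of_real s * c * cnj c) + \<i> * of_real b"
  have u2u2: "Q u2 u2 = of_real s / (z1 * cnj z1)" unfolding u2_def by (simp add: sdef)
  have c2: "z2 + cnj z2 + Q u2 u2 = 0"
    unfolding u2u2 z2_def z1_def using sn cn by (simp add: field_simps)
  have s2: "XM e u2 z2 \<in> stabilizer_SU Q e" by (rule XM_stab[OF ee _ c2]) (simp add: u2_def u1e)
  define z3 where "z3 = - z1 / \<alpha>"
  have an: "\<alpha> \<noteq> 0" using im by auto
  have bn: "\<beta> \<noteq> 0" using im \<beta>_def by simp
  have c3: "z3 + cnj z3 + Q 0 0 = 0" unfolding z3_def z1_def ac using cn bn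
    by (simp add: field_simps)
  have s3: "XM f 0 z3 \<in> stabilizer_SU Q f" by (rule XM_stab[OF ff _ c3]) simp
  have a1: "XM f u1 z1 *v e = e + u1 + z1 *s f" by (simp add: X_def ef eu1)
  have key: "1 + of_real s / cnj z1 + z1 * z2 = \<alpha>"
  proof -
    have cz1: "cnj z1 = - of_real (s/2) * \<i> * cnj c" unfolding z1_def by simp
    have t1: "of_real s / cnj z1 = 2 * \<i> / cnj c" unfolding cz1 using sn cn
      by (simp add: field_simps)
    have t2: "z1 * z2 = - \<i> / cnj c - of_real (s * b / 2) * c" unfolding z1_def z2_def using sn cn
      by (simp add: field_simps)
    have pos: "1 + \<tau>^2 \<noteq> 0" using zero_le_power2[of \<tau>] by linarith
    have sb: "s * b / 2 = \<tau> / (1 + \<tau>^2) - \<beta>" 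
    proof -
      have "s * b / 2 = (s * (2/s) / 2) * (\<tau> / (1 + \<tau>^2) - \<beta>)" by (simp add: b_def)
      also have "s * (2/s) / 2 = 1" using sn by simp
      finally show ?thesis by simp
    qed
    have r1: "of_real \<tau> / cnj c = of_real \<tau> * c / (c * cnj c)" using cn by simp
    have r: "of_real (\<tau> / (1 + \<tau>^2)) * c = of_real \<tau> / cnj c"
      unfolding r1 ccn using pos by (simp add: field_simps)
    have t3: "of_real (s * b / 2) * c = of_real \<tau> / cnj c - \<alpha>"
      unfolding sb ac r[symmetric] by (simp add: algebra_simps)
    have cc0: "cnj c \<noteq> 0" using cn by simp
    have "1 + of_real s / cnj z1 + z1 * z2 = \<alpha> + (cnj c + \<i> - of_real \<tau>) / cnj c"
      unfolding t1 t2 t3 using cc0 by (simp add: field_simps)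
    also have "cnj c + \<i> - of_real \<tau> = 0" unfolding cnn by simp
    finally show ?thesis by simp
  qed
  have a2: "XM e u2 z2 *v (e + u1 + z1 *s f) = \<alpha> *s e + z1 *s f"
  proof -
    have q1: "Q (e + u1 + z1 *s f) e = z1" by (simp add: ee u1e fe)
    have q2: "Q (e + u1 + z1 *s f) u2 = - of_real s / cnj z1"
      unfolding u2_def by (simp add: eu1 fu1 sdef)
    have "XM e u2 z2 *v (e + u1 + z1 *s f) = (1 + of_real s / cnj z1 + z1 * z2) *s e + z1 *s f"
      unfolding XM_apply X_def q1 q2 u2_def using z1n
      by (simp add: algebra_simps vector_sadd_rdistrib vector_smult_assoc eu1 fu1 sdef ee u1e fe)
    then show ?thesis unfolding key .
  qed
  have a3: "XM f 0 z3 *v (\<alpha> *s e + z1 *s f) = \<alpha> *s e"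
    using an by (simp add: X_def ff ef z3_def algebra_simps vector_sadd_rdistrib[symmetric])
  have "(XM f 0 z3 ** XM e u2 z2 ** XM f u1 z1) *v e = \<alpha> *s e"
    by (simp only: matrix_vector_mul_assoc[symmetric] a1 a2 a3)
  then show ?thesis using s1 s2 s3 by blast
qed


lemma aniso:
  assumes "u \<noteq> 0" "Q u e = 0" "Q u f = 0"
  shows "\<exists>u1. Q u1 e = 0 \<and> Q u1 f = 0 \<and> Q u1 u1 \<noteq> 0"
proof -
  obtain y where y: "Q u y \<noteq> 0" using nd assms(1) unfolding nondegenerate_form_def by blast
  define y' where "y' = wp y"
  have uy: "Q u y' = Q u y" using assms(2,3) by (simp add: y'_def wp_def)
  have y'e: "Q y' e = 0" "Q y' f = 0" by (simp_all add: y'_def wp_e wp_f)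
  show ?thesis
  proof (cases "Q u u = 0 \<and> Q y' y' = 0")
    case False
    then show ?thesis using assms y'e by blast
  next
    case True
    define c where "c = Q u y'"
    define x where "x = u + c *s y'"
    have yu: "Q y' u = cnj c" unfolding c_def by (metis Qsym)
    have "Q x x = 2 * (c * cnj c)" unfolding x_def using True yu c_def by (simp add: algebra_simps)
    moreover have "c * cnj c \<noteq> 0" using y uy c_def by simp
    moreover have "Q x e = 0" "Q x f = 0" unfolding x_def using assms y'e by simp_all
    ultimately show ?thesis by auto
  qed
qed

lemma torus:
  assumes an: "\<alpha> \<noteq> 0" and r: "cnj \<alpha> = \<alpha> \<or> (\<exists>u. u \<noteq> 0 \<and> Q u e = 0 \<and> Q u f = 0)"
  shows "\<exists>t1\<in>stabilizer_SU Q f. \<exists>t2\<in>stabilizer_SU Q e. \<exists>t3\<in>stabilizer_SU Q f.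
           (t3 ** t2 ** t1) *v e = \<alpha> *s e"
proof (cases "Im \<alpha> = 0")
  case True
  then have "cnj \<alpha> = \<alpha>" by (simp add: complex_eq_iff)
  then show ?thesis using torus_real an by blast
next
  case False
  then have "cnj \<alpha> \<noteq> \<alpha>" by (simp add: complex_eq_iff)
  then obtain u where "u \<noteq> 0" "Q u e = 0" "Q u f = 0" using r by blast
  then obtain u1 where "Q u1 e = 0" "Q u1 f = 0" "Q u1 u1 \<noteq> 0" using aniso by blast
  then show ?thesis using torus_complex False by blast
qed


lemma e_nz: "e \<noteq> 0" using ef by auto
lemma f_nz: "f \<noteq> 0" using ef by auto

lemma N2_real:
  fixes w :: "'n \<Rightarrow> complex^'n"
  assumes W0: "\<And>u. Q u e = 0 \<Longrightarrow> Q u f = 0 \<Longrightarrow> u = 0"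
    and B: "invertible (\<chi> i j. w j $ i)" and we: "w i0 = e" and wf: "f = c *s w j0"
    and k: "k \<in> SU_form Q" and ke: "k *v e = \<alpha> *s e"
  shows "cnj \<alpha> = \<alpha>"
proof -
  let ?B = "(\<chi> i j. w j $ i) :: complex^'n^'n"
  have span: "x = Q x f *s e + Q x e *s f" for x
    using W0[OF wp_e[of x] wp_f[of x]] unfolding wp_def by (simp add: algebra_simps)
  have kQ: "Q (k *v x) (k *v y) = Q x y" for x y using k by (simp add: SU_form_def)
  have an: "\<alpha> \<noteq> 0"
  proof
    assume "\<alpha> = 0"
    then have "k *v e = k *v 0" using ke by simp
    then show False using inj_matrix_vector_mult[OF SU_invertible[OF k]] e_nz
      by (meson injD)
  qed
  have q1: "cnj \<alpha> * Q (k *v f) e = 1"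
    using kQ[of f e] fe ke by simp
  define \<gamma> where "\<gamma> = Q (k *v f) f"
  have qe: "Q (k *v f) e = 1 / cnj \<alpha>" using q1 an by (simp add: field_simps)
  have kf: "k *v f = \<gamma> *s e + (1 / cnj \<alpha>) *s f"
  proof -
    have h: "k *v f = Q (k *v f) f *s e + Q (k *v f) e *s f" by (rule span)
    show ?thesis unfolding \<gamma>_def by (subst h) (simp add: qe)
  qed
  have "Q (k *v f) (k *v f) = 0" using kQ[of f f] ff by simp
  then have iso: "\<gamma> / \<alpha> + cnj \<gamma> / cnj \<alpha> = 0"
    unfolding kf using an by (simp add: ee ff ef fe algebra_simps)
  define z where "z = - \<gamma> * cnj \<alpha>"
  have zc: "z + cnj z + Q 0 0 = 0"
  proof -
    have "z + cnj z = - (\<alpha> * cnj \<alpha>) * (\<gamma> / \<alpha> + cnj \<gamma> / cnj \<alpha>)"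
      unfolding z_def using an by (simp add: field_simps)
    then show ?thesis using iso by simp
  qed
  have Xs: "XM e 0 z \<in> stabilizer_SU Q e" by (rule XM_stab[OF ee _ zc]) simp
  define k2 where "k2 = XM e 0 z ** k"
  have k2SU: "k2 \<in> SU_form Q" unfolding k2_def using Xs k SU_mult stabilizer_SU_def by blast
  have k2e: "k2 *v e = \<alpha> *s e"
    unfolding k2_def by (simp add: matrix_vector_mul_assoc[symmetric] ke X_def ee)
  have k2f: "k2 *v f = (1 / cnj \<alpha>) *s f"
    unfolding k2_def using an by (simp add: matrix_vector_mul_assoc[symmetric] kf X_def ee fe z_def
        algebra_simps vector_sadd_rdistrib[symmetric])
  have cn: "c \<noteq> 0" using f_nz wf by auto
  have ij: "i0 \<noteq> j0"
  proof
    assume "i0 = j0"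
    then have "f = c *s e" using wf we by simp
    then show False using ef ee by simp
  qed
  have Bax: "?B *v axis j 1 = w j" for j
    by (simp add: vec_eq_iff matrix_vector_mult_def axis_def if_distrib[of "(*) _"] cong: if_cong)
  have injB: "inj ((*v) ?B)" by (rule inj_matrix_vector_mult[OF B])
  have U: "j = i0 \<or> j = j0" for j
  proof (rule ccontr)
    assume nj: "\<not> (j = i0 \<or> j = j0)"
    define a where "a = Q (w j) f"
    define b where "b = Q (w j) e"
    have wj: "w j = a *s w i0 + (b * c) *s w j0"
      using span[of "w j"] unfolding a_def b_def we wf by (simp add: vector_smult_assoc)
    define x where "x = axis j 1 - a *s axis i0 1 - (b * c) *s axis j0 (1::complex)"
    have "?B *v x = 0"
      unfolding x_def by (simp add: matrix_vector_mult_diff_distrib vec.scale Bax wj)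
    moreover have "x \<noteq> 0"
    proof
      assume "x = 0"
      then have "x $ j = 0" by simp
      then show False using nj unfolding x_def by (simp add: axis_def)
    qed
    ultimately show False using injB by (metis injD matrix_vector_mult_0_right)
  qed
  define l where "l j = (if j = i0 then \<alpha> else 1 / cnj \<alpha>)" for j
  have ev: "k2 *v column j ?B = l j *s column j ?B" for j
  proof -
    have col: "column j ?B = w j" by (simp add: column_def vec_eq_iff)
    show ?thesis
    proof (cases "j = i0")
      case True
      then show ?thesis unfolding col l_def using k2e we by simp
    next
      case False
      then have jj: "j = j0" using U by blast
      have "c *s (k2 *v w j0) = c *s ((1 / cnj \<alpha>) *s w j0)"
        using k2f unfolding wf by (simp add: vec.scale vector_smult_assoc mult.commute)
      then have "k2 *v w j0 = (1 / cnj \<alpha>) *s w j0"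
        using cn by (metis vector_mul_lcancel)
      then show ?thesis unfolding col l_def using False jj by simp
    qed
  qed
  have "det k2 = prod l UNIV" by (rule det_eigen[OF B ev])
  also have "UNIV = {i0, j0}" using U by blast
  also have "prod l {i0, j0} = \<alpha> / cnj \<alpha>" using ij by (simp add: l_def)
  finally have "\<alpha> / cnj \<alpha> = 1" using k2SU by (simp add: SU_form_def)
  then show ?thesis using an by (simp add: field_simps)
qed


lemma main_pair:
  assumes Hg: "matrix_subgroup H" and HSU: "H \<subseteq> SU_form Q"
    and He: "stabilizer_SU Q e \<subseteq> H" and Hf: "stabilizer_SU Q f \<subseteq> H"
    and rc: "\<And>\<alpha> k. k \<in> SU_form Q \<Longrightarrow> k *v e = \<alpha> *s e \<Longrightarrow>
               cnj \<alpha> = \<alpha> \<or> (\<exists>u. u \<noteq> 0 \<and> Q u e = 0 \<and> Q u f = 0)"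
  shows "SU_form Q \<subseteq> H"
proof
  fix g assume g: "g \<in> SU_form Q"
  have Hm: "A \<in> H \<Longrightarrow> B \<in> H \<Longrightarrow> A ** B \<in> H" for A B using Hg by (simp add: matrix_subgroup_def)
  have Hi: "A \<in> H \<Longrightarrow> matrix_inv A \<in> H" for A using Hg by (simp add: matrix_subgroup_def)
  have sSU: "stabilizer_SU Q p \<subseteq> SU_form Q" for p by (auto simp: stabilizer_SU_def)
  have QSU: "A \<in> SU_form Q \<Longrightarrow> Q (A *v x) (A *v y) = Q x y" for A x y by (simp add: SU_form_def)
  define v where "v = g *v e"
  have vn: "v \<noteq> 0"
  proof
    assume "v = 0"
    then have "g *v e = g *v 0" unfolding v_def by simp
    then show False using inj_matrix_vector_mult[OF SU_invertible[OF g]] e_nz by (meson injD)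
  qed
  obtain h0 where h0: "h0 \<in> stabilizer_SU Q e" and h0v: "Q (h0 *v v) f \<noteq> 0" using S1[OF vn] by blast
  define v1 where "v1 = h0 *v v"
  have h0S: "h0 \<in> SU_form Q" using h0 sSU by blast
  have iso: "Q v1 v1 = 0" unfolding v1_def v_def using QSU[OF h0S] QSU[OF g] ee by simp
  define \<alpha> where "\<alpha> = Q v1 f"
  have an: "\<alpha> \<noteq> 0" using h0v unfolding \<alpha>_def v1_def .
  obtain h1 where h1: "h1 \<in> stabilizer_SU Q f" and h1v: "h1 *v v1 = \<alpha> *s e"
    using S2[OF iso an[unfolded \<alpha>_def]] unfolding \<alpha>_def by blast
  have h1S: "h1 \<in> SU_form Q" using h1 sSU by blast
  define k where "k = h1 ** (h0 ** g)"
  have kS: "k \<in> SU_form Q" unfolding k_def using h1S h0S g SU_mult by blast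
  have ke: "k *v e = \<alpha> *s e"
    unfolding k_def by (simp add: matrix_vector_mul_assoc[symmetric] v_def[symmetric] v1_def[symmetric] h1v)
  obtain t1 t2 t3 where t1: "t1 \<in> stabilizer_SU Q f" and t2: "t2 \<in> stabilizer_SU Q e"
      and t3: "t3 \<in> stabilizer_SU Q f" and te: "(t3 ** t2 ** t1) *v e = \<alpha> *s e"
    using torus[OF an rc[OF kS ke]] by blast
  define t where "t = t3 ** t2 ** t1"
  have tH: "t \<in> H" unfolding t_def using t1 t2 t3 He Hf Hm by blast
  have tS: "t \<in> SU_form Q" using tH HSU by blast
  have tinv: "invertible t" using SU_invertible[OF tS] .
  define r where "r = matrix_inv t ** k"
  have rS: "r \<in> SU_form Q" unfolding r_def using SU_inv[OF tS] kS SU_mult by blast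
  have "r *v e = matrix_inv t *v (t *v e)"
    unfolding r_def matrix_vector_mul_assoc[symmetric] ke using te t_def by simp
  also have "\<dots> = e" by (simp add: matrix_vector_mul_assoc inv_props(2)[OF tinv])
  finally have "r \<in> stabilizer_SU Q e" using rS by (simp add: stabilizer_SU_def)
  then have rH: "r \<in> H" using He by blast
  have "k = t ** r" unfolding r_def by (simp add: matrix_mul_assoc inv_props(1)[OF tinv])
  then have kH: "k \<in> H" using tH rH Hm by simp
  have h0H: "h0 \<in> H" and h1H: "h1 \<in> H" using h0 h1 He Hf by blast+
  have "g = matrix_inv h0 ** (matrix_inv h1 ** k)"
    unfolding k_def
    by (simp add: matrix_mul_assoc inv_props(2)[OF SU_invertible[OF h0S]] inv_props(2)[OF SU_invertible[OF h1S]])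
  then show "g \<in> H" using Hm Hi kH h0H h1H by metis
qed

end
lemma stab_scale:
  fixes w :: "complex^'n"
  assumes "c \<noteq> 0"
  shows "stabilizer_SU Q (c *s w) = stabilizer_SU Q w"
proof -
  have "A *v (c *s w) = c *s w \<longleftrightarrow> A *v w = w" for A :: "complex^'n^'n"
    using assms by (simp add: vec.scale vector_mul_lcancel)
  then show ?thesis by (simp add: stabilizer_SU_def)
qed

theorem mainTheorem13:
  fixes Q :: "complex^'n \<Rightarrow> complex^'n \<Rightarrow> complex"
    and w :: "'n \<Rightarrow> complex^'n"
  assumes "hermitian_form Q"
    and "nondegenerate_form Q"
    and "nondefinite_form Q"
    and "invertible (\<chi> i j. w j $ i)"
    and "\<forall>i. Q (w i) (w i) = 0"
    and "\<forall>i j. i \<noteq> j \<longrightarrow> Q (w i) (w j) \<noteq> 0"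
  shows "closed_subgroup_generated Q (\<Union>i. stabilizer_SU Q (w i)) = SU_form Q"
proof -
  interpret hf Q using assms(1) by unfold_locales
  let ?B = "(\<chi> i j. w j $ i) :: complex^'n^'n"
  have Bax: "?B *v axis j 1 = w j" for j
    by (simp add: vec_eq_iff matrix_vector_mult_def axis_def if_distrib[of "(*) _"] cong: if_cong)
  have wnz: "w j \<noteq> 0" for j
  proof
    assume "w j = 0"
    then have "?B *v axis j 1 = ?B *v 0" using Bax by simp
    then have "axis j (1::complex) = 0" using inj_matrix_vector_mult[OF assms(4)] by (meson injD)
    then show False by (simp add: axis_eq_0_iff)
  qed
  obtain i0 :: 'n where True by blast
  obtain j0 where ij: "j0 \<noteq> i0"
  proof (rule ccontr)
    assume "\<not> thesis"
    then have all: "j = i0" for j using that by blast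
    obtain j1 where "w i0 $ j1 \<noteq> 0" using wnz[of i0] by (auto simp: vec_eq_iff)
    moreover have "j1 = i0" by (rule all)
    ultimately have wi: "w i0 $ i0 \<noteq> 0" by simp
    have xx: "Q x x = 0" for x
    proof -
      define c where "c = x $ i0 / w i0 $ i0"
      have "x = c *s w i0"
        unfolding vec_eq_iff
      proof
        fix j :: 'n
        have "j = i0" by (rule all)
        then show "x $ j = (c *s w i0) $ j" using wi by (simp add: c_def)
      qed
      then show ?thesis using assms(5) by simp
    qed
    then show False using assms(3) unfolding nondefinite_form_def by force
  qed
  define q where "q = Q (w i0) (w j0)"
  have qn: "q \<noteq> 0" using assms(6) ij unfolding q_def by auto
  define c where "c = 1 / cnj q"
  have cn: "c \<noteq> 0" using qn c_def by simp
  define e where "e = w i0"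
  define f where "f = c *s w j0"
  interpret pair Q e f
  proof unfold_locales
    show "nondegenerate_form Q" by (rule assms(2))
    show "Q e e = 0" using assms(5) e_def by simp
    show "Q f f = 0" using assms(5) f_def by simp
    show "Q e f = 1" unfolding e_def f_def c_def using qn by (simp add: q_def[symmetric])
  qed
  have sf: "stabilizer_SU Q f = stabilizer_SU Q (w j0)" unfolding f_def by (rule stab_scale[OF cn])
  have SUin: "SU_form Q \<subseteq> H"
    if H: "H \<subseteq> SU_form Q" "matrix_subgroup H" "(\<Union>i. stabilizer_SU Q (w i)) \<subseteq> H" for H
  proof (rule main_pair[OF H(2) H(1)])
    show "stabilizer_SU Q e \<subseteq> H" using H(3) e_def by blast
    show "stabilizer_SU Q f \<subseteq> H" using H(3) sf by blast
    fix \<alpha> k assume k: "k \<in> SU_form Q" "k *v e = \<alpha> *s e"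
    show "cnj \<alpha> = \<alpha> \<or> (\<exists>u. u \<noteq> 0 \<and> Q u e = 0 \<and> Q u f = 0)"
    proof (cases "\<exists>u. u \<noteq> 0 \<and> Q u e = 0 \<and> Q u f = 0")
      case False
      then have W0: "\<And>u. Q u e = 0 \<Longrightarrow> Q u f = 0 \<Longrightarrow> u = 0" by blast
      show ?thesis using N2_real[OF W0 assms(4) e_def[symmetric] f_def k] by blast
    qed blast
  qed
  have SUmem: "SU_form Q \<in> {H. H \<subseteq> SU_form Q \<and> matrix_subgroup H \<and> closed H \<and> (\<Union>i. stabilizer_SU Q (w i)) \<subseteq> H}"
    using SU_subgroup SU_closed by (auto simp: stabilizer_SU_def)
  show ?thesis
    unfolding closed_subgroup_generated_def
  proof
    show "\<Inter>{H. H \<subseteq> SU_form Q \<and> matrix_subgroup H \<and> closed H \<and> (\<Union>i. stabilizer_SU Q (w i)) \<subseteq> H} \<subseteq> SU_form Q"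
      using SUmem by blast
    show "SU_form Q \<subseteq> \<Inter>{H. H \<subseteq> SU_form Q \<and> matrix_subgroup H \<and> closed H \<and> (\<Union>i. stabilizer_SU Q (w i)) \<subseteq> H}"
      using SUin by blast
  qed
qed

end
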